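(* Let $\varphi\colon\mathcal{M}\to\mathcal{X}$ be a smooth lift, $y\in\mathcal{M}$ and $x=\varphi(y)$. Then $\varphi$ satisfies "1 $\Rightarrow$ 1" at $y$ if and only if $\operatorname{im}\mathrm{D}\varphi(y)=\mathrm{T}_x\mathcal{X}$. Moreover, if $\varphi$ does not satisfy "1 $\Rightarrow$ 1" at $y$, there is a linear cost $f\colon\mathcal{E}\to\mathbb{R}$ such that $y$ is 1-critical for $g=f\circ\varphi$ on $\mathcal{M}$ but $x$ is not stationary for $f$ on $\mathcal{X}$.
   Context: Let $\mathcal{E}$ be a finite-dimensional real inner product space and $\mathcal{M}$ a smooth manifold. A smooth lift of $\mathcal{X}\subseteq\mathcal{E}$ is a smooth map $\varphi\colon\mathcal{M}\to\mathcal{E}$ with $\varphi(\mathcal{M})=\mathcal{X}$; $\mathrm{D}\varphi(y)\colon\mathrm{T}_y\mathcal{M}\to\mathcal{E}$ is its differential. The tangent cone to $\mathcal{X}$ at $x\in\mathcal{X}$ is $\mathrm{T}_x\mathcal{X}=\{\lim_{i\to\infty}(x_i-x)/\tau_i : x_i\in\mathcal{X},\ \tau_i>0,\ \tau_i\to0\}$. For a cone $K$, $K^*=\{u\in\mathcal{E}:\langle u,v\rangle\ge0\ \forall v\in K\}$. For differentiable $f\colon\mathcal{E}\to\mathbb{R}$, $x\in\mathcal{X}$ is stationary for $f$ on $\mathcal{X}$ if $\mathrm{D}f(x)[v]\ge0$ for all $v\in\mathrm{T}_x\mathcal{X}$, i.e. $\nabla f(x)\in(\mathrm{T}_x\mathcal{X})^*$.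 With $g=f\circ\varphi$, $y\in\mathcal{M}$ is 1-critical if $(g\circ c)'(0)=0$ for every smooth curve $c\colon\mathbb{R}\to\mathcal{M}$ with $c(0)=y$. The lift satisfies "1 $\Rightarrow$ 1" at $y$ if for every differentiable $f$, whenever $y$ is 1-critical for $g$, $\varphi(y)$ is stationary for $f$ on $\mathcal{X}$. *)

theory Defs
  imports "HOL-Analysis.Analysis"
begin

text \<open>In finite dimensions this is exactly the usual notion of a C-infinity map.\<close>
coinductive smooth_on :: "'a::real_normed_vector set \<Rightarrow> ('a \<Rightarrow> 'b::real_normed_vector) \<Rightarrow> bool"
  for S :: "'a set" where
  "\<lbrakk>\<forall>x\<in>S. f differentiable (at x);
    \<forall>v. smooth_on S (\<lambda>x. frechet_derivative f (at x) v)\<rbrakk> \<Longrightarrow> smooth_on S f"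

text \<open>A smooth atlas on the topological space 'm (the manifold M is the whole type),
  modelled on the Euclidean space 'n.\<close>
definition smooth_atlas :: "('m::topological_space set \<times> ('m \<Rightarrow> 'n::euclidean_space)) set \<Rightarrow> bool" where
  "smooth_atlas A \<longleftrightarrow>
     \<Union>(fst ` A) = UNIV \<and>
     (\<forall>(U,\<psi>)\<in>A. open U \<and> open (\<psi> ` U) \<and> homeomorphism U (\<psi> ` U) \<psi> (inv_into U \<psi>)) \<and>
     (\<forall>(U,\<psi>)\<in>A. \<forall>(V,\<theta>)\<in>A. smooth_on (\<psi> ` (U \<inter> V)) (\<theta> \<circ> inv_into U \<psi>))"

definition smooth_map :: "('m::topological_space set \<times> ('m \<Rightarrow> 'n::euclidean_space)) set
    \<Rightarrow> ('m \<Rightarrow> 'e::real_normed_vector) \<Rightarrow> bool" where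
  "smooth_map A \<phi> \<longleftrightarrow> (\<forall>(U,\<psi>)\<in>A. smooth_on (\<psi> ` U) (\<phi> \<circ> inv_into U \<psi>))"

definition smooth_curve :: "('m::topological_space set \<times> ('m \<Rightarrow> 'n::euclidean_space)) set
    \<Rightarrow> (real \<Rightarrow> 'm) \<Rightarrow> bool" where
  "smooth_curve A c \<longleftrightarrow> continuous_on UNIV c \<and> (\<forall>(U,\<psi>)\<in>A. smooth_on (c -` U) (\<psi> \<circ> c))"

text \<open>The image of the differential D phi(y), computed in a chart around y
  (chart-independent).\<close>
definition diff_image :: "('m::topological_space set \<times> ('m \<Rightarrow> 'n::euclidean_space)) set
    \<Rightarrow> ('m \<Rightarrow> 'e::real_normed_vector) \<Rightarrow> 'm \<Rightarrow> 'e set" where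
  "diff_image A \<phi> y = (SOME W. \<exists>(U,\<psi>)\<in>A. y \<in> U \<and>
       W = range (frechet_derivative (\<phi> \<circ> inv_into U \<psi>) (at (\<psi> y))))"

definition tangent_cone :: "'e::real_normed_vector set \<Rightarrow> 'e \<Rightarrow> 'e set" where
  "tangent_cone X x = {v. \<exists>xs \<tau>. (\<forall>i. xs i \<in> X) \<and> (\<forall>i. \<tau> i > (0::real)) \<and>
       \<tau> \<longlonglongrightarrow> 0 \<and> (\<lambda>i. (1 / \<tau> i) *\<^sub>R (xs i - x)) \<longlonglongrightarrow> v}"

definition stationary :: "('e::real_normed_vector \<Rightarrow> real) \<Rightarrow> 'e set \<Rightarrow> 'e \<Rightarrow> bool" where
  "stationary f X x \<longleftrightarrow> (\<forall>v\<in>tangent_cone X x. frechet_derivative f (at x) v \<ge> 0)"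

definition one_critical :: "('m::topological_space set \<times> ('m \<Rightarrow> 'n::euclidean_space)) set
    \<Rightarrow> ('m \<Rightarrow> real) \<Rightarrow> 'm \<Rightarrow> bool" where
  "one_critical A g y \<longleftrightarrow>
     (\<forall>c. smooth_curve A c \<and> c 0 = y \<longrightarrow> ((g \<circ> c) has_real_derivative 0) (at 0))"

definition one_to_one :: "('m::topological_space set \<times> ('m \<Rightarrow> 'n::euclidean_space)) set
    \<Rightarrow> ('m \<Rightarrow> 'e::real_normed_vector) \<Rightarrow> 'm \<Rightarrow> bool" where
  "one_to_one A \<phi> y \<longleftrightarrow>
     (\<forall>f::'e \<Rightarrow> real. (\<forall>x. f differentiable (at x)) \<longrightarrow>
        one_critical A (f \<circ> \<phi>) y \<longrightarrow> stationary f (range \<phi>) (\<phi> y))"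

end

theory Submission
  imports Defs
begin

lemma smooth_on_diff: "smooth_on S f \<Longrightarrow> x \<in> S \<Longrightarrow> f differentiable (at x)"
  by (erule smooth_on.cases) auto

lemma smooth_on_deriv: "smooth_on S f \<Longrightarrow> smooth_on S (\<lambda>x. frechet_derivative f (at x) v)"
  by (erule smooth_on.cases) auto

lemma smooth_const: "smooth_on S (\<lambda>x. c)"
proof (rule smooth_on.coinduct[where X="\<lambda>f. \<exists>c. f = (\<lambda>x. c)"])
  fix f :: "'a \<Rightarrow> 'b" assume "\<exists>c. f = (\<lambda>x. c)"
  then obtain c where f: "f = (\<lambda>x. c)" by blast
  have "frechet_derivative f (at x) v = 0" for x v
    using frechet_derivative_at[OF has_derivative_const] f by simp
  then show "\<exists>fa. f = fa \<and> (\<forall>x\<in>S. fa differentiable at x) \<and>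
          (\<forall>v. (\<exists>c. (\<lambda>x. frechet_derivative fa (at x) v) = (\<lambda>x. c)) \<or>
               smooth_on S (\<lambda>x. frechet_derivative fa (at x) v))" using f by auto
qed auto

lemma smooth_affine:
  assumes "bounded_linear g"
  shows "smooth_on S (\<lambda>x. g x + c)"
proof (rule smooth_on.intros)
  have d: "((\<lambda>x. g x + c) has_derivative g) (at x)" for x
    using assms by (auto intro!: derivative_eq_intros bounded_linear_imp_has_derivative)
  show "\<forall>x\<in>S. (\<lambda>x. g x + c) differentiable at x" using d by (auto simp: differentiable_def)
  have "frechet_derivative (\<lambda>x. g x + c) (at x) = g" for x
    using frechet_derivative_at[OF d] by simp
  then show "\<forall>v. smooth_on S (\<lambda>x. frechet_derivative (\<lambda>x. g x + c) (at x) v)"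
    by (simp add: smooth_const)
qed

lemma has_derivative_sum_list:
  assumes "\<And>q. q \<in> set L \<Longrightarrow> ((g q) has_derivative (g' q)) F"
  shows "((\<lambda>x. \<Sum>q\<leftarrow>L. g q x) has_derivative (\<lambda>v. \<Sum>q\<leftarrow>L. g' q v)) F"
  using assms
proof (induction L)
  case Nil then show ?case by (simp add: has_derivative_const)
next
  case (Cons a L)
  then show ?case by (auto intro!: has_derivative_add)
qed

lemma smooth_sumprod:
  fixes L :: "(('a::real_normed_vector \<Rightarrow> real) \<times> ('a \<Rightarrow> 'b::real_normed_vector)) list"
  assumes S: "open S" and L: "\<forall>q\<in>set L. smooth_on S (fst q) \<and> smooth_on S (snd q)"
  shows "smooth_on S (\<lambda>x. \<Sum>q\<leftarrow>L. fst q x *\<^sub>R snd q x)"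
proof (rule smooth_on.coinduct[where X="\<lambda>F. \<exists>L. (\<forall>q\<in>set L. smooth_on S (fst q) \<and> smooth_on S (snd q)) \<and>
      (\<forall>x\<in>S. F x = (\<Sum>q\<leftarrow>L. fst q x *\<^sub>R snd q x))"])
  show "\<exists>L'. (\<forall>q\<in>set L'. smooth_on S (fst q) \<and> smooth_on S (snd q)) \<and>
      (\<forall>x\<in>S. (\<Sum>q\<leftarrow>L. fst q x *\<^sub>R snd q x) = (\<Sum>q\<leftarrow>L'. fst q x *\<^sub>R snd q x))"
    using L by blast
next
    fix F :: "'a \<Rightarrow> 'b" assume "\<exists>L. (\<forall>q\<in>set L. smooth_on S (fst q) \<and> smooth_on S (snd q)) \<and>
      (\<forall>x\<in>S. F x = (\<Sum>q\<leftarrow>L. fst q x *\<^sub>R snd q x))"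
    then obtain L where L: "\<forall>q\<in>set L. smooth_on S (fst q) \<and> smooth_on S (snd q)"
      and F: "\<forall>x\<in>S. F x = (\<Sum>q\<leftarrow>L. fst q x *\<^sub>R snd q x)" by blast
    define D where "D x v = (\<Sum>q\<leftarrow>L. fst q x *\<^sub>R frechet_derivative (snd q) (at x) v
       + frechet_derivative (fst q) (at x) v *\<^sub>R snd q x)" for x v
    have hd: "(F has_derivative D x) (at x)" if x: "x \<in> S" for x
    proof -
      have "((\<lambda>x. \<Sum>q\<leftarrow>L. fst q x *\<^sub>R snd q x) has_derivative D x) (at x)"
        unfolding D_def
      proof (rule has_derivative_sum_list)
        fix q assume q: "q \<in> set L"
        then have "fst q differentiable at x" "snd q differentiable at x"
          using L x smooth_on_diff by blast+
        then show "((\<lambda>x. fst q x *\<^sub>R snd q x) has_derivative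
           (\<lambda>v. fst q x *\<^sub>R frechet_derivative (snd q) (at x) v
           + frechet_derivative (fst q) (at x) v *\<^sub>R snd q x)) (at x)"
          by (intro has_derivative_scaleR) (auto simp: frechet_derivative_works)
      qed
      then show ?thesis
        by (rule has_derivative_transform_within_open[OF _ S x]) (use F in auto)
    qed
    have fd: "frechet_derivative F (at x) v = D x v" if "x \<in> S" for x v
      using frechet_derivative_at[OF hd[OF that]] by simp
    show "\<exists>f. F = f \<and> (\<forall>x\<in>S. f differentiable at x) \<and>
          (\<forall>v. (\<exists>L. (\<forall>q\<in>set L. smooth_on S (fst q) \<and> smooth_on S (snd q)) \<and>
      (\<forall>x\<in>S. frechet_derivative f (at x) v = (\<Sum>q\<leftarrow>L. fst q x *\<^sub>R snd q x))) \<or>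
               smooth_on S (\<lambda>x. frechet_derivative f (at x) v))"
    proof (intro exI[of _ F] conjI allI disjI1)
      show "\<forall>x\<in>S. F differentiable at x" using hd by (auto simp: differentiable_def)
      fix v
      let ?L = "map (\<lambda>q. (fst q, \<lambda>x. frechet_derivative (snd q) (at x) v)) L @
                map (\<lambda>q. (\<lambda>x. frechet_derivative (fst q) (at x) v, snd q)) L"
      have s1: "\<forall>q\<in>set ?L. smooth_on S (fst q) \<and> smooth_on S (snd q)"
        using L by (fastforce intro!: smooth_on_deriv)
      have s2: "\<forall>x\<in>S. frechet_derivative F (at x) v = (\<Sum>q\<leftarrow>?L. fst q x *\<^sub>R snd q x)"
        by (simp add: fd D_def sum_list_addf o_def)
      show "\<exists>L. (\<forall>q\<in>set L. smooth_on S (fst q) \<and> smooth_on S (snd q)) \<and>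
         (\<forall>x\<in>S. frechet_derivative F (at x) v = (\<Sum>q\<leftarrow>L. fst q x *\<^sub>R snd q x))"
        using s1 s2 by blast
    qed simp
qed

lemma smooth_scaleR:
  assumes "open S" "smooth_on S p" "smooth_on S h"
  shows "smooth_on S (\<lambda>x. p x *\<^sub>R h x)"
  using smooth_sumprod[OF assms(1), of "[(p,h)]"] assms by simp

lemma smooth_add:
  assumes "open S" "smooth_on S f" "smooth_on S g"
  shows "smooth_on S (\<lambda>x. f x + g x)"
  using smooth_sumprod[OF assms(1), of "[(\<lambda>x. 1, f), (\<lambda>x. 1, g)]"] assms
  by (simp add: smooth_const)

lemma smooth_tanh_curve:
  fixes h :: "'n::euclidean_space \<Rightarrow> 'b::real_normed_vector" and a w :: 'n
  assumes S: "open S" and h: "smooth_on S h"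
  defines "\<gamma> \<equiv> (\<lambda>t::real. a + tanh t *\<^sub>R w)"
  shows "smooth_on (\<gamma> -` S) (h \<circ> \<gamma>)"
proof (rule smooth_on.coinduct[where X="\<lambda>F. \<exists>h. smooth_on S h \<and> (\<forall>t\<in>\<gamma> -` S. F t = h (\<gamma> t))"])
  show "\<exists>h'. smooth_on S h' \<and> (\<forall>t\<in>\<gamma> -` S. (h \<circ> \<gamma>) t = h' (\<gamma> t))"
    using h by auto
next
  have gd: "(\<gamma> has_derivative (\<lambda>s. (s * (1 - tanh t ^ 2)) *\<^sub>R w)) (at t)" for t
  proof -
    have "((\<lambda>x. tanh x) has_field_derivative (1 - tanh t ^ 2) * 1) (at t)"
      by (rule has_field_derivative_tanh[OF cosh_real_nonzero DERIV_ident])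
    then have "(tanh has_derivative (\<lambda>s. s * (1 - tanh t ^ 2))) (at t)"
      by (simp add: has_field_derivative_def mult.commute[of _ "1 - tanh t ^ 2"])
    then show ?thesis
      unfolding \<gamma>_def by (auto intro!: derivative_eq_intros)
  qed
  have gc: "continuous_on UNIV \<gamma>"
    unfolding \<gamma>_def by (auto intro!: continuous_intros)
  have T: "open (\<gamma> -` S)" using open_vimage[OF S gc] .
  define w' where "w' = (1 / (w \<bullet> w)) *\<^sub>R w"
  define l where "l x = x \<bullet> w' + (- (a \<bullet> w'))" for x
  have l_smooth: "smooth_on S l"
    unfolding l_def by (rule smooth_affine) (rule bounded_linear_inner_left)
  have l_gamma: "w \<noteq> 0 \<Longrightarrow> l (\<gamma> t) = tanh t" for t
    unfolding l_def \<gamma>_def w'_def by (simp add: inner_add_left diff_divide_distrib[symmetric])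
  fix F :: "real \<Rightarrow> 'b"
  assume "\<exists>h. smooth_on S h \<and> (\<forall>t\<in>\<gamma> -` S. F t = h (\<gamma> t))"
  then obtain h where h: "smooth_on S h" and F: "\<forall>t\<in>\<gamma> -` S. F t = h (\<gamma> t)" by blast
  define D where "D t = frechet_derivative h (at (\<gamma> t)) \<circ> (\<lambda>s. (s * (1 - tanh t ^ 2)) *\<^sub>R w)" for t
  have hd: "(F has_derivative D t) (at t)" if t: "t \<in> \<gamma> -` S" for t
  proof -
    have "h differentiable at (\<gamma> t)" using smooth_on_diff h t by blast
    then have "(h \<circ> \<gamma> has_derivative D t) (at t)"
      unfolding D_def by (intro diff_chain_at gd) (simp add: frechet_derivative_works[symmetric])
    then show ?thesis
      by (rule has_derivative_transform_within_open[OF _ T t]) (use F in auto)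
  qed
  have fd: "frechet_derivative F (at t) v = D t v" if "t \<in> \<gamma> -` S" for t v
    using frechet_derivative_at[OF hd[OF that]] by simp
  show "\<exists>f. F = f \<and> (\<forall>x\<in>\<gamma> -` S. f differentiable at x) \<and>
          (\<forall>v. (\<exists>h. smooth_on S h \<and> (\<forall>t\<in>\<gamma> -` S. frechet_derivative f (at t) v = h (\<gamma> t))) \<or>
               smooth_on (\<gamma> -` S) (\<lambda>x. frechet_derivative f (at x) v))"
  proof (intro exI[of _ F] conjI allI disjI1)
    show "\<forall>x\<in>\<gamma> -` S. F differentiable at x" using hd by (auto simp: differentiable_def)
    fix v
    define H where "H x = ((\<lambda>x. v) x + ((\<lambda>x. - v) x *\<^sub>R l x) *\<^sub>R l x) *\<^sub>R
        frechet_derivative h (at x) w" for x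
    have Hs: "smooth_on S H"
      unfolding H_def
      by (intro smooth_scaleR smooth_add smooth_const l_smooth smooth_on_deriv h S)
    have "frechet_derivative F (at t) v = H (\<gamma> t)" if t: "t \<in> \<gamma> -` S" for t
    proof -
      have lin: "linear (frechet_derivative h (at (\<gamma> t)))"
        using smooth_on_diff[OF h] t
        by (auto simp: frechet_derivative_works intro: has_derivative_linear)
      show ?thesis
      proof (cases "w = 0")
        case True
        then show ?thesis using lin fd[OF t] by (simp add: D_def H_def linear_0)
      next
        case False
        then show ?thesis using lin fd[OF t] l_gamma[OF False, of t]
        proof -
          have "frechet_derivative F (at t) v = (v * (1 - tanh t ^ 2)) *\<^sub>R frechet_derivative h (at (\<gamma> t)) w"
            using fd[OF t] by (simp add: D_def linear_cmul[OF lin])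
          moreover have "v * (1 - tanh t ^ 2) = v + (- v * tanh t) * tanh t"
            by (simp add: power2_eq_square algebra_simps)
          ultimately show ?thesis using l_gamma[OF False, of t] by (simp add: H_def)
        qed
      qed
    qed
    then show "\<exists>h. smooth_on S h \<and> (\<forall>t\<in>\<gamma> -` S. frechet_derivative F (at t) v = h (\<gamma> t))"
      using Hs by blast
  qed simp
qed


lemma gamma_deriv:
  "((\<lambda>t. a + tanh t *\<^sub>R w) has_derivative (\<lambda>s. (s * (1 - tanh t ^ 2)) *\<^sub>R w)) (at t)"
proof -
  have "((\<lambda>x. tanh x) has_field_derivative (1 - tanh t ^ 2) * 1) (at t)"
    by (rule has_field_derivative_tanh[OF cosh_real_nonzero DERIV_ident])
  then have "(tanh has_derivative (\<lambda>s. s * (1 - tanh t ^ 2))) (at t)"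
    by (simp add: has_field_derivative_def mult.commute[of _ "1 - tanh t ^ 2"])
  then show ?thesis by (auto intro!: derivative_eq_intros)
qed

lemma diff_quot_seq:
  fixes g :: "real \<Rightarrow> 'e::real_normed_vector"
  assumes "(g has_derivative (\<lambda>s. s *\<^sub>R d)) (at 0)"
  shows "(\<lambda>i. (1 / inverse (real (Suc i))) *\<^sub>R (g (inverse (real (Suc i))) - g 0)) \<longlonglongrightarrow> d"
proof -
  define \<tau> where "\<tau> i = inverse (real (Suc i))" for i
  have "((\<lambda>h. norm (g (0 + h) - g 0 - h *\<^sub>R d) / norm h) \<longlongrightarrow> 0) (at 0)"
    using assms unfolding has_derivative_at by blast
  moreover have "\<forall>i. \<tau> i \<in> UNIV - {0}" by (simp add: \<tau>_def)
  moreover have "\<tau> \<longlonglongrightarrow> 0" unfolding \<tau>_def by (rule LIMSEQ_inverse_real_of_nat)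
  ultimately have "(\<lambda>i. norm (g (\<tau> i) - g 0 - \<tau> i *\<^sub>R d) / norm (\<tau> i)) \<longlonglongrightarrow> 0"
    unfolding tendsto_at_iff_sequentially o_def by force
  moreover have "norm (g (\<tau> i) - g 0 - \<tau> i *\<^sub>R d) / norm (\<tau> i)
      = norm ((1 / \<tau> i) *\<^sub>R (g (\<tau> i) - g 0) - d)" for i
  proof -
    have pos: "\<tau> i > 0" by (simp add: \<tau>_def)
    have "(1 / \<tau> i) *\<^sub>R (g (\<tau> i) - g 0) - d = (1 / \<tau> i) *\<^sub>R (g (\<tau> i) - g 0 - \<tau> i *\<^sub>R d)"
      using pos by (simp add: algebra_simps)
    then show ?thesis using pos by (simp add: divide_simps)
  qed
  ultimately have "(\<lambda>i. norm ((1 / \<tau> i) *\<^sub>R (g (\<tau> i) - g 0) - d)) \<longlonglongrightarrow> 0" by simp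
  then have "(\<lambda>i. (1 / \<tau> i) *\<^sub>R (g (\<tau> i) - g 0) - d) \<longlonglongrightarrow> 0"
    using tendsto_norm_zero_iff by blast
  then show ?thesis unfolding \<tau>_def using Lim_null by blast
qed


theorem theorem2p4:
  fixes A :: "('m::{t2_space, second_countable_topology} set \<times> ('m \<Rightarrow> 'n::euclidean_space)) set"
    and \<phi> :: "'m \<Rightarrow> 'e::euclidean_space"
    and y :: 'm
  assumes "smooth_atlas A"
    and "smooth_map A \<phi>"
  shows "(one_to_one A \<phi> y \<longleftrightarrow> diff_image A \<phi> y = tangent_cone (range \<phi>) (\<phi> y))
       \<and> (\<not> one_to_one A \<phi> y \<longrightarrow>
            (\<exists>f::'e \<Rightarrow> real. linear f \<and> one_critical A (f \<circ> \<phi>) y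
                 \<and> \<not> stationary f (range \<phi>) (\<phi> y)))"
proof -
  have cover: "\<Union>(fst ` A) = UNIV"
    and charts: "\<And>U \<psi>. (U,\<psi>) \<in> A \<Longrightarrow> open U \<and> open (\<psi> ` U) \<and> homeomorphism U (\<psi> ` U) \<psi> (inv_into U \<psi>)"
    and trans: "\<And>U \<psi> V \<theta>. (U,\<psi>) \<in> A \<Longrightarrow> (V,\<theta>) \<in> A \<Longrightarrow> smooth_on (\<psi> ` (U \<inter> V)) (\<theta> \<circ> inv_into U \<psi>)"
    using assms(1) unfolding smooth_atlas_def by auto
  have smap: "\<And>U \<psi>. (U,\<psi>) \<in> A \<Longrightarrow> smooth_on (\<psi> ` U) (\<phi> \<circ> inv_into U \<psi>)"
    using assms(2) unfolding smooth_map_def by auto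
  have ex: "\<exists>W. \<exists>(U,\<psi>)\<in>A. y \<in> U \<and> W = range (frechet_derivative (\<phi> \<circ> inv_into U \<psi>) (at (\<psi> y)))"
  proof -
    from cover obtain p where "p \<in> A" "y \<in> fst p" by blast
    then show ?thesis by (cases p) auto
  qed
  obtain U \<psi> where UA: "(U,\<psi>) \<in> A" and yU: "y \<in> U"
    and DI: "diff_image A \<phi> y = range (frechet_derivative (\<phi> \<circ> inv_into U \<psi>) (at (\<psi> y)))"
  proof -
    from someI_ex[OF ex] obtain p where "p \<in> A" "y \<in> fst p"
      "diff_image A \<phi> y = range (frechet_derivative (\<phi> \<circ> inv_into (fst p) (snd p)) (at (snd p y)))"
      unfolding diff_image_def by (auto simp: case_prod_beta)
    then show thesis using that by (cases p) auto
  qed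
  from charts[OF UA] have oU: "open U" and opU: "open (\<psi> ` U)"
    and hom: "homeomorphism U (\<psi> ` U) \<psi> (inv_into U \<psi>)" by auto
  have invf: "\<And>x. x \<in> U \<Longrightarrow> inv_into U \<psi> (\<psi> x) = x"
    using hom unfolding homeomorphism_def by auto
  have contInv: "continuous_on (\<psi> ` U) (inv_into U \<psi>)"
    using hom unfolding homeomorphism_def by auto
  define \<Phi> where "\<Phi> = \<phi> \<circ> inv_into U \<psi>"
  define a where "a = \<psi> y"
  have aU: "a \<in> \<psi> ` U" using yU a_def by blast
  define L where "L = frechet_derivative \<Phi> (at a)"
  have hL: "(\<Phi> has_derivative L) (at a)"
    using smooth_on_diff[OF smap[OF UA] aU] unfolding L_def \<Phi>_def
    by (simp add: frechet_derivative_works)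
  have linL: "linear L" using hL has_derivative_linear by blast
  have \<Phi>a: "\<Phi> a = \<phi> y" unfolding \<Phi>_def a_def using invf[OF yU] by simp
  have DI': "diff_image A \<phi> y = range L" using DI unfolding L_def \<Phi>_def a_def .
  define T where "T = tangent_cone (range \<phi>) (\<phi> y)"

  have F1: "range L \<subseteq> T"
  proof
    fix v assume "v \<in> range L"
    then obtain w where v: "v = L w" by blast
    define g where "g t = \<Phi> (a + t *\<^sub>R w)" for t :: real
    have "((\<lambda>t. a + t *\<^sub>R w) has_derivative (\<lambda>s. s *\<^sub>R w)) (at 0)"
      by (auto intro!: derivative_eq_intros)
    from diff_chain_at[OF this] hL
    have "(g has_derivative L \<circ> (\<lambda>s. s *\<^sub>R w)) (at 0)"
      unfolding g_def o_def by simp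
    moreover have "L \<circ> (\<lambda>s. s *\<^sub>R w) = (\<lambda>s. s *\<^sub>R v)"
      using linL v by (auto simp: linear_cmul)
    ultimately have "(g has_derivative (\<lambda>s. s *\<^sub>R v)) (at 0)" by simp
    from diff_quot_seq[OF this]
    have lim: "(\<lambda>i. (1 / inverse (real (Suc i))) *\<^sub>R (g (inverse (real (Suc i))) - \<phi> y)) \<longlonglongrightarrow> v"
      using \<Phi>a by (simp add: g_def)
    show "v \<in> T" unfolding T_def tangent_cone_def
    proof (intro CollectI exI conjI allI)
      show "g (inverse (real (Suc i))) \<in> range \<phi>" for i unfolding g_def \<Phi>_def by simp
      show "0 < inverse (real (Suc i))" for i by simp
      show "(\<lambda>i. inverse (real (Suc i))) \<longlonglongrightarrow> 0" by (rule LIMSEQ_inverse_real_of_nat)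
    qed (rule lim)
  qed

  have F2: "\<exists>D0. ((\<phi> \<circ> c) has_derivative (L \<circ> D0)) (at 0)"
    if c: "smooth_curve A c" "c 0 = y" for c
  proof -
    have cc: "continuous_on UNIV c" and sc: "smooth_on (c -` U) (\<psi> \<circ> c)"
      using c(1) UA unfolding smooth_curve_def by auto
    have O: "open (c -` U)" using open_vimage[OF oU cc] .
    have O0: "(0::real) \<in> c -` U" using c(2) yU by simp
    have "(\<psi> \<circ> c) differentiable at 0" using smooth_on_diff[OF sc O0] .
    then have d0: "((\<psi> \<circ> c) has_derivative frechet_derivative (\<psi> \<circ> c) (at 0)) (at 0)"
      by (simp add: frechet_derivative_works)
    have "(\<Phi> has_derivative L) (at ((\<psi> \<circ> c) 0))" using hL c(2) a_def by simp
    from diff_chain_at[OF d0 this]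
    have "(\<Phi> \<circ> (\<psi> \<circ> c) has_derivative L \<circ> frechet_derivative (\<psi> \<circ> c) (at 0)) (at 0)" .
    then have "((\<phi> \<circ> c) has_derivative L \<circ> frechet_derivative (\<psi> \<circ> c) (at 0)) (at 0)"
      by (rule has_derivative_transform_within_open[OF _ O O0])
         (simp add: \<Phi>_def invf)
    then show ?thesis by blast
  qed

  have F3: "\<exists>c k. smooth_curve A c \<and> c 0 = y \<and> k > 0 \<and>
              ((\<phi> \<circ> c) has_derivative (L \<circ> (\<lambda>s. s *\<^sub>R (k *\<^sub>R w0)))) (at 0)" for w0
  proof -
    obtain r where r: "r > 0" "ball a r \<subseteq> \<psi> ` U" using opU aU open_contains_ball by blast
    define k where "k = r / (2 * (norm w0 + 1))"
    have k: "k > 0" unfolding k_def by (rule divide_pos_pos[OF r(1)]) (smt (verit) norm_ge_zero)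
    define w where "w = k *\<^sub>R w0"
    have nw: "norm w < r"
    proof -
      have "norm w = r * (norm w0 / (2 * (norm w0 + 1)))" using r k by (simp add: w_def k_def)
      also have "\<dots> < r * 1"
      proof (rule mult_strict_left_mono[OF _ r(1)])
        have "0 < 2 * (norm w0 + 1)" "norm w0 < 2 * (norm w0 + 1)" by (smt (verit) norm_ge_zero)+
        then show "norm w0 / (2 * (norm w0 + 1)) < 1" by simp
      qed
      finally show ?thesis by simp
    qed
    define \<gamma> where "\<gamma> = (\<lambda>t::real. a + tanh t *\<^sub>R w)"
    have \<gamma>U: "\<gamma> t \<in> \<psi> ` U" for t
    proof -
      have "\<bar>tanh t\<bar> < 1" using tanh_real_bounds[of t] by auto
      then have "norm (tanh t *\<^sub>R w) \<le> norm w"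
        by (simp add: mult_left_le_one_le)
      then have "\<gamma> t \<in> ball a r" using nw by (simp add: \<gamma>_def dist_norm)
      then show ?thesis using r by blast
    qed
    define c where "c = inv_into U \<psi> \<circ> \<gamma>"
    have gc: "continuous_on UNIV \<gamma>" unfolding \<gamma>_def by (auto intro!: continuous_intros)
    have c0: "c 0 = y" unfolding c_def \<gamma>_def using invf[OF yU] a_def by simp
    have cU: "c t \<in> U" for t
      unfolding c_def using \<gamma>U[of t] by (auto intro: inv_into_into)
    have \<psi>c: "\<psi> (c t) = \<gamma> t" for t
      unfolding c_def using \<gamma>U[of t] by (simp add: f_inv_into_f)
    have sc: "smooth_curve A c"
      unfolding smooth_curve_def
    proof (intro conjI ballI)
      show "continuous_on UNIV c" unfolding c_def o_def
        by (rule continuous_on_compose2[OF contInv gc]) (use \<gamma>U in auto)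
      fix p assume pA: "p \<in> A"
      obtain V \<theta> where p: "p = (V, \<theta>)" by (cases p)
      with pA have VA: "(V,\<theta>) \<in> A" by simp
      from charts[OF VA] have oV: "open V" by simp
      define S where "S = \<psi> ` (U \<inter> V)"
      have "openin (top_of_set (\<psi> ` U)) S"
        unfolding S_def by (rule homeomorphism_imp_open_map[OF hom openin_open_Int[OF oV]])
      then have oS: "open S" using opU openin_open_trans by blast
      have sm: "smooth_on (\<gamma> -` S) ((\<theta> \<circ> inv_into U \<psi>) \<circ> \<gamma>)"
        unfolding \<gamma>_def by (rule smooth_tanh_curve[OF oS trans[OF UA VA, folded S_def]])
      have eqv: "\<gamma> t \<in> S \<longleftrightarrow> c t \<in> V" for t
      proof
        assume "\<gamma> t \<in> S"
        then obtain u where u: "u \<in> U \<inter> V" "\<gamma> t = \<psi> u" unfolding S_def by blast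
        then have "c t = u" unfolding c_def using invf by simp
        then show "c t \<in> V" using u by simp
      next
        assume "c t \<in> V"
        then show "\<gamma> t \<in> S" unfolding S_def using cU[of t] \<psi>c[of t] by (metis IntI image_eqI)
      qed
      moreover have "\<gamma> -` S = c -` V" using eqv by auto
      moreover have "(\<theta> \<circ> inv_into U \<psi>) \<circ> \<gamma> = \<theta> \<circ> c" unfolding c_def by (simp add: o_assoc)
      ultimately show "case p of (U, \<psi>) \<Rightarrow> smooth_on (c -` U) (\<psi> \<circ> c)" using p sm by simp
    qed
    have "(\<gamma> has_derivative (\<lambda>s. s *\<^sub>R w)) (at 0)"
      using gamma_deriv[of a w 0] unfolding \<gamma>_def by simp
    from diff_chain_at[OF this] hL
    have "(\<Phi> \<circ> \<gamma> has_derivative L \<circ> (\<lambda>s. s *\<^sub>R w)) (at 0)"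
      by (simp add: \<gamma>_def)
    moreover have "\<Phi> \<circ> \<gamma> = \<phi> \<circ> c" unfolding \<Phi>_def c_def by (simp add: o_assoc)
    ultimately have dd: "((\<phi> \<circ> c) has_derivative (L \<circ> (\<lambda>s. s *\<^sub>R (k *\<^sub>R w0)))) (at 0)"
      unfolding w_def by simp
    show ?thesis by (rule exI[of _ c], rule exI[of _ k], intro conjI sc c0 k dd)
  qed

  have PA: "one_to_one A \<phi> y" if eq: "range L = T"
    unfolding one_to_one_def
  proof (intro allI impI)
    fix f :: "'e \<Rightarrow> real"
    assume fd: "\<forall>x. f differentiable at x" and oc: "one_critical A (f \<circ> \<phi>) y"
    define Df where "Df = frechet_derivative f (at (\<phi> y))"
    have hf: "(f has_derivative Df) (at (\<phi> y))" using fd by (simp add: Df_def frechet_derivative_works)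
    have linf: "linear Df" using hf has_derivative_linear by blast
    show "stationary f (range \<phi>) (\<phi> y)" unfolding stationary_def
    proof
      fix v assume "v \<in> tangent_cone (range \<phi>) (\<phi> y)"
      then have "v \<in> range L" using eq T_def by simp
      then obtain w0 where v: "v = L w0" by blast
      from F3[of w0] obtain c k where c: "smooth_curve A c" "c 0 = y" "k > 0"
        and dc: "((\<phi> \<circ> c) has_derivative (L \<circ> (\<lambda>s. s *\<^sub>R (k *\<^sub>R w0)))) (at 0)" by blast
      have "(f has_derivative Df) (at ((\<phi> \<circ> c) 0))" using hf c(2) by simp
      from diff_chain_at[OF dc this]
      have d1: "((f \<circ> \<phi>) \<circ> c has_derivative Df \<circ> (L \<circ> (\<lambda>s. s *\<^sub>R (k *\<^sub>R w0)))) (at 0)"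
        by (simp add: o_def)
      have "((f \<circ> \<phi>) \<circ> c has_real_derivative 0) (at 0)" using oc c unfolding one_critical_def by blast
      then have d2: "((f \<circ> \<phi>) \<circ> c has_derivative (\<lambda>s. 0 * s)) (at 0)"
        by (simp only: has_field_derivative_def)
      have E: "Df \<circ> (L \<circ> (\<lambda>s. s *\<^sub>R (k *\<^sub>R w0))) = (\<lambda>s. 0 * s)"
        by (rule has_derivative_unique[OF d1 d2])
      have "(Df \<circ> (L \<circ> (\<lambda>s. s *\<^sub>R (k *\<^sub>R w0)))) 1 = (\<lambda>s::real. 0 * s) 1"
        by (simp only: E)
      then have "Df (L (k *\<^sub>R w0)) = 0" by simp
      then have "k * Df (L w0) = 0" using linL linf by (simp add: linear_cmul)
      then have "Df (L w0) = 0" using c(3) by simp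
      then show "frechet_derivative f (at (\<phi> y)) v \<ge> 0" using v Df_def by simp
    qed
  qed

  have PB: "\<exists>f::'e \<Rightarrow> real. linear f \<and> one_critical A (f \<circ> \<phi>) y
                 \<and> \<not> stationary f (range \<phi>) (\<phi> y)" if ne: "range L \<noteq> T"
  proof -
    from ne F1 obtain v where vT: "v \<in> T" and vL: "v \<notin> range L" by blast
    have sub: "subspace (range L)" by (rule linear_subspace_image[OF linL subspace_UNIV])
    then have sp: "span (range L) = range L" by (simp add: span_eq_iff)
    obtain p z where p: "p \<in> span (range L)" and z: "\<And>w. w \<in> span (range L) \<Longrightarrow> orthogonal z w"
      and vpz: "v = p + z"
      by (rule orthogonal_subspace_decomp_exists[of "range L" v]) blast
    have zL: "\<And>s. z \<bullet> L s = 0" using z sp by (auto simp: orthogonal_def)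
    have "z \<noteq> 0" using vL vpz p sp by auto
    define f where "f e = (- z) \<bullet> e" for e
    have blf: "bounded_linear f" unfolding f_def by (rule bounded_linear_inner_right)
    then have hf: "(f has_derivative f) (at x)" for x by (rule bounded_linear_imp_has_derivative)
    have fdf: "frechet_derivative f (at x) = f" for x using frechet_derivative_at[OF hf[of x]] by simp
    have "f v = - (z \<bullet> p) - z \<bullet> z" unfolding f_def vpz by (simp add: inner_add_right)
    also have "z \<bullet> p = 0" using z[OF p] by (simp add: orthogonal_def)
    finally have fv: "f v < 0" using \<open>z \<noteq> 0\<close> by simp
    have oc: "one_critical A (f \<circ> \<phi>) y" unfolding one_critical_def
    proof (intro allI impI)
      fix c assume c: "smooth_curve A c \<and> c 0 = y"
      then obtain D0 where dc: "((\<phi> \<circ> c) has_derivative (L \<circ> D0)) (at 0)" using F2 by blast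
      from diff_chain_at[OF dc hf]
      have "((f \<circ> \<phi>) \<circ> c has_derivative f \<circ> (L \<circ> D0)) (at 0)" by (simp add: o_def)
      moreover have "f \<circ> (L \<circ> D0) = (\<lambda>s. 0 * s)" by (auto simp: f_def zL)
      ultimately show "((f \<circ> \<phi>) \<circ> c has_real_derivative 0) (at 0)"
        unfolding has_field_derivative_def by (simp only:)
    qed
    have "\<not> stationary f (range \<phi>) (\<phi> y)"
    proof
      assume "stationary f (range \<phi>) (\<phi> y)"
      then have "frechet_derivative f (at (\<phi> y)) v \<ge> 0" using vT unfolding stationary_def T_def by blast
      then show False using fv fdf by simp
    qed
    then show ?thesis using blf oc bounded_linear.linear by blast
  qed

  have nPB: "\<not> one_to_one A \<phi> y" if ne: "range L \<noteq> T"
  proof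
    assume o: "one_to_one A \<phi> y"
    from PB[OF ne] obtain f :: "'e \<Rightarrow> real" where f: "linear f" "one_critical A (f \<circ> \<phi>) y"
      "\<not> stationary f (range \<phi>) (\<phi> y)" by blast
    have "bounded_linear f" using f(1) by (simp add: linear_conv_bounded_linear)
    then have "\<forall>x. f differentiable at x"
      by (auto intro: bounded_linear_imp_differentiable)
    then show False using o f unfolding one_to_one_def by blast
  qed
  show ?thesis
  proof (cases "range L = T")
    case True then show ?thesis using PA DI' T_def by auto
  next
    case False then show ?thesis using PB nPB DI' T_def by auto
  qed
qed

end
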